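(* For every finite graph $G$ on $n \ge 1$ vertices, we have \[f(G) \ge \frac{1}{250}\left(\frac{n}{\hom(G)}\right)^{1/2}.\]
   Context: All graphs are finite and simple. A subset of the vertices of a graph is homogeneous if it induces either a clique or an independent set; $\hom(G)$ denotes the size of the largest homogeneous set of $G$. For a graph $G$, $f(G)$ denotes the largest integer $k$ for which $G$ contains an induced subgraph in which exactly $k$ distinct values occur among the vertex degrees (i.e., an induced subgraph with $k$ distinct degrees). *)

theory Defs
  imports Complex_Main
begin

text \<open>A finite simple graph is given by a finite vertex set V and a symmetric,
irreflexive edge relation E (only its restriction to V matters).\<close>

definition simple_graph :: "'a set \<Rightarrow> ('a \<Rightarrow> 'a \<Rightarrow> bool) \<Rightarrow> bool" where
  "simple_graph V E \<longleftrightarrow> finite V \<and> (\<forall>u\<in>V. \<forall>v\<in>V. E u v \<longleftrightarrow> E v u) \<and> (\<forall>v\<in>V. \<not> E v v)"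

definition homogeneous :: "('a \<Rightarrow> 'a \<Rightarrow> bool) \<Rightarrow> 'a set \<Rightarrow> bool" where
  "homogeneous E S \<longleftrightarrow>
     (\<forall>u\<in>S. \<forall>v\<in>S. u \<noteq> v \<longrightarrow> E u v) \<or> (\<forall>u\<in>S. \<forall>v\<in>S. u \<noteq> v \<longrightarrow> \<not> E u v)"

definition hom :: "'a set \<Rightarrow> ('a \<Rightarrow> 'a \<Rightarrow> bool) \<Rightarrow> nat" where
  "hom V E = Max {card S | S. S \<subseteq> V \<and> homogeneous E S}"

definition induced_degree :: "('a \<Rightarrow> 'a \<Rightarrow> bool) \<Rightarrow> 'a set \<Rightarrow> 'a \<Rightarrow> nat" where
  "induced_degree E S v = card {u \<in> S. E v u}"

definition num_distinct_degrees :: "('a \<Rightarrow> 'a \<Rightarrow> bool) \<Rightarrow> 'a set \<Rightarrow> nat" where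
  "num_distinct_degrees E S = card (induced_degree E S ` S)"

definition f_distinct :: "'a set \<Rightarrow> ('a \<Rightarrow> 'a \<Rightarrow> bool) \<Rightarrow> nat" where
  "f_distinct V E = Max {num_distinct_degrees E S | S. S \<subseteq> V}"

end

theory Submission
  imports Defs Complex_Main
begin



lemma my_cs:
  fixes f :: "'b \<Rightarrow> real"
  shows "(\<Sum>i\<in>I. f i)\<^sup>2 \<le> real (card I) * (\<Sum>i\<in>I. (f i)\<^sup>2)"
proof (cases "finite I \<and> I \<noteq> {}")
  case True
  define c where "c = real (card I)"
  define s where "s = (\<Sum>i\<in>I. f i)"
  define q where "q = (\<Sum>i\<in>I. (f i)\<^sup>2)"
  define m where "m = s / c"
  have c0: "c > 0" using True by (simp add: c_def card_gt_0_iff)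
  have "0 \<le> (\<Sum>i\<in>I. (f i - m)\<^sup>2)" by (intro sum_nonneg) auto
  also have "(\<Sum>i\<in>I. (f i - m)\<^sup>2) = (\<Sum>i\<in>I. (f i)\<^sup>2 - 2 * m * f i + m\<^sup>2)"
    by (intro sum.cong refl) (simp add: power2_eq_square algebra_simps)
  also have "\<dots> = q - 2 * m * s + c * m\<^sup>2"
    by (simp add: sum.distrib sum_subtractf sum_distrib_left q_def s_def c_def)
  also have "\<dots> = q - s\<^sup>2 / c" using c0 by (simp add: m_def power2_eq_square field_simps)
  finally have "s\<^sup>2 / c \<le> q" by simp
  then have "s\<^sup>2 \<le> c * q" using c0 by (simp add: field_simps)
  then show ?thesis by (simp add: c_def s_def q_def)
qed auto

lemma sum_ind_card:
  assumes "finite A"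
  shows "(\<Sum>x\<in>A. if P x then 1 else 0::real) = real (card {x\<in>A. P x})"
  using assms by (simp add: sum.inter_filter[symmetric])

lemma count_cs:
  assumes "finite W"
  shows "real (card W)^2 \<le> real (card (g ` W)) * (\<Sum>x\<in>W. real (card {y\<in>W. g y = g x}))"
proof -
  let ?c = "\<lambda>v. real (card {x\<in>W. g x = v})"
  have 1: "real (card W) = (\<Sum>v\<in>g ` W. ?c v)"
  proof -
    have "real (card W) = (\<Sum>x\<in>W. 1::real)" by simp
    also have "\<dots> = (\<Sum>v\<in>g ` W. \<Sum>x\<in>{x. x\<in>W \<and> g x = v}. 1)"
      by (rule sum.image_gen[OF assms])
    finally show ?thesis by simp
  qed
  have 2: "(\<Sum>x\<in>W. real (card {y\<in>W. g y = g x})) = (\<Sum>v\<in>g ` W. (?c v)^2)"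
  proof -
    have "(\<Sum>x\<in>W. real (card {y\<in>W. g y = g x})) = (\<Sum>v\<in>g ` W. \<Sum>x\<in>{x. x\<in>W \<and> g x = v}. real (card {y\<in>W. g y = g x}))"
      by (rule sum.image_gen[OF assms])
    also have "\<dots> = (\<Sum>v\<in>g ` W. \<Sum>x\<in>{x. x\<in>W \<and> g x = v}. ?c v)"
      by (intro sum.cong refl) auto
    also have "\<dots> = (\<Sum>v\<in>g ` W. (?c v)^2)" by (simp add: power2_eq_square)
    finally show ?thesis .
  qed
  show ?thesis unfolding 1 2 by (rule my_cs)
qed




lemma caro_wei:
  assumes "finite S" "\<forall>u\<in>S. \<forall>v\<in>S. F u v = F v u" "\<forall>v\<in>S. \<not> F v v"
  shows "\<exists>I\<subseteq>S. (\<forall>u\<in>I. \<forall>v\<in>I. \<not> F u v) \<and>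
           (\<Sum>y\<in>S. 1 / (real (card {z\<in>S. F y z}) + 1)) \<le> real (card I)"
  using assms
proof (induction "card S" arbitrary: S rule: less_induct)
  case less
  show ?case
  proof (cases "S = {}")
    case True then show ?thesis by (intro exI[of _ "{}"]) simp
  next
    case False
    let ?d = "\<lambda>T y. card {z\<in>T. F y z}"
    have "finite (?d S ` S)" "?d S ` S \<noteq> {}" using less.prems(1) False by auto
    note fin = this
    have "Min (?d S ` S) \<in> ?d S ` S" using fin by (rule Min_in)
    then obtain v where v0: "v \<in> S" "?d S v = Min (?d S ` S)" by auto
    have v: "v \<in> S" "\<forall>u\<in>S. ?d S v \<le> ?d S u"
      using v0 fin(1) by auto
    define Nv where "Nv = insert v {z\<in>S. F v z}"
    define S' where "S' = S - Nv"
    have NvS: "Nv \<subseteq> S" using v by (auto simp: Nv_def)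
    have vN: "v \<in> Nv" by (simp add: Nv_def)
    have cardS': "card S' < card S"
      unfolding S'_def using vN NvS less.prems(1) by (intro psubset_card_mono) auto
    have fS': "finite S'" using less.prems(1) by (simp add: S'_def)
    obtain I' where I': "I' \<subseteq> S'" "\<forall>u\<in>I'. \<forall>w\<in>I'. \<not> F u w"
      "(\<Sum>y\<in>S'. 1 / (real (?d S' y) + 1)) \<le> real (card I')"
      using less.hyps[OF cardS' fS'] less.prems(2,3) unfolding S'_def by blast
    define I where "I = insert v I'"
    have vI': "v \<notin> I'" using I'(1) vN by (auto simp: S'_def)
    have fI': "finite I'" using I'(1) fS' finite_subset by blast
    have indep: "\<forall>u\<in>I. \<forall>w\<in>I. \<not> F u w"
    proof (intro ballI)
      fix u w assume "u \<in> I" "w \<in> I"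
      moreover have "\<not> F v u" if "u \<in> I'" for u
        using that I'(1) by (auto simp: S'_def Nv_def)
      moreover have "\<not> F u v" if "u \<in> I'" for u
        using that I'(1) less.prems(2) v(1) \<open>\<And>u. u \<in> I' \<Longrightarrow> \<not> F v u\<close> by (auto simp: S'_def)
      ultimately show "\<not> F u w" using I'(2) less.prems(3) v(1) by (auto simp: I_def)
    qed
    have split: "S = Nv \<union> S'" "Nv \<inter> S' = {}" using NvS by (auto simp: S'_def)
    have fNv: "finite Nv" using NvS less.prems(1) finite_subset by blast
    have s1: "(\<Sum>y\<in>Nv. 1 / (real (?d S y) + 1)) \<le> 1"
    proof -
      have "(\<Sum>y\<in>Nv. 1 / (real (?d S y) + 1)) \<le> (\<Sum>y\<in>Nv. 1 / (real (?d S v) + 1))"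
        using NvS v(2) by (intro sum_mono) (auto intro!: divide_left_mono)
      also have "\<dots> = real (card Nv) / (real (?d S v) + 1)" by simp
      also have "card Nv = ?d S v + 1"
      proof -
        have "v \<notin> {z\<in>S. F v z}" using less.prems(3) v(1) by auto
        then show ?thesis unfolding Nv_def using less.prems(1) by simp
      qed
      finally show ?thesis by (simp add: add.commute)
    qed
    have s2: "(\<Sum>y\<in>S'. 1 / (real (?d S y) + 1)) \<le> (\<Sum>y\<in>S'. 1 / (real (?d S' y) + 1))"
    proof (intro sum_mono divide_left_mono)
      fix y assume "y \<in> S'"
      have "?d S' y \<le> ?d S y" using less.prems(1) by (intro card_mono) (auto simp: S'_def)
      then show "real (?d S' y) + 1 \<le> real (?d S y) + 1" by simp
    qed auto
    have "(\<Sum>y\<in>S. 1 / (real (?d S y) + 1)) = (\<Sum>y\<in>Nv. 1 / (real (?d S y) + 1)) + (\<Sum>y\<in>S'. 1 / (real (?d S y) + 1))"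
      using split fNv fS' by (simp add: sum.union_disjoint)
    also have "\<dots> \<le> 1 + real (card I')" using s1 s2 I'(3) by linarith
    also have "\<dots> = real (card I)" using vI' fI' by (simp add: I_def)
    finally show ?thesis using indep I'(1) v(1) by (intro exI[of _ I]) (auto simp: I_def S'_def)
  qed
qed




lemma binom_rec1: "((2*m+1) choose m) * (m+1) = (2*m+1) * ((2*m) choose m)"
proof -
  have "Suc (2*m) * ((2*m) choose m) = (Suc (2*m) choose Suc m) * Suc m"
    by (rule Suc_times_binomial_eq)
  moreover have "Suc (2*m) choose Suc m = (2*m+1) choose m"
    using binomial_symmetric[of "Suc m" "Suc (2*m)"] by simp
  ultimately show ?thesis by (simp del: binomial_Suc_Suc)
qed

lemma binom_rec2: "((2*(m+1)) choose (m+1)) = 2 * ((2*m+1) choose m)"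
proof -
  have "Suc (2*m+1) * ((2*m+1) choose m) = (Suc (2*m+1) choose Suc m) * Suc m"
    by (rule Suc_times_binomial_eq)
  then have "(2*m+2) * ((2*m+1) choose m) = ((2*(m+1)) choose (m+1)) * (m+1)" by (simp del: binomial_Suc_Suc)
  then have "(m+1) * (2 * ((2*m+1) choose m)) = (m+1) * ((2*(m+1)) choose (m+1))"
    by (simp add: algebra_simps del: binomial_Suc_Suc)
  moreover have "m+1 \<noteq> (0::nat)" by simp
  ultimately show ?thesis by (metis mult_left_cancel)
qed

lemma central_even: "real ((2*m) choose m)^2 * (2*real m+1) \<le> 16^m"
proof (induction m)
  case 0 then show ?case by simp
next
  case (Suc m)
  define a where "a = real ((2*m) choose m)"
  define a' where "a' = real ((2*(m+1)) choose (m+1))"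
  have r1: "real ((2*m+1) choose m) * (real m+1) = (2*real m+1) * a"
    using arg_cong[OF binom_rec1[of m], of real] by (simp add: a_def algebra_simps del: binomial_Suc_Suc)
  have r2: "a' = 2 * real ((2*m+1) choose m)"
    using arg_cong[OF binom_rec2[of m], of real] by (simp add: a'_def del: binomial_Suc_Suc)
  have ra: "a' * (real m + 1) = 2 * (2*real m+1) * a" using r1 r2 by (simp add: algebra_simps)
  have IH: "a^2 * (2*real m+1) \<le> 16^m" using Suc.IH by (simp add: a_def)
  have a0: "a \<ge> 0" by (simp add: a_def)
  have "(a' * (real m + 1))^2 * (2*real m+3) = 4 * (2*real m+1) * (2*real m+3) * (a^2 * (2*real m+1))"
    unfolding ra by (simp add: power2_eq_square algebra_simps)
  also have "\<dots> \<le> 4 * (2*real m+1) * (2*real m+3) * 16^m"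
    by (intro mult_left_mono IH) auto
  also have "\<dots> \<le> 16 * (real m + 1)^2 * 16^m"
    by (intro mult_right_mono) (auto simp: power2_eq_square algebra_simps)
  finally have X: "(a' * (real m + 1))^2 * (2*real m+3) \<le> 16 * (real m + 1)^2 * 16^m" .
  have eqL: "(a' * (real m + 1))^2 * (2*real m+3) = (real m + 1)^2 * (a'^2 * (2*real m+3))"
    by (simp add: power_mult_distrib)
  have "(real m + 1)^2 * (a'^2 * (2*real m+3)) \<le> (real m + 1)^2 * 16^(Suc m)"
    using X unfolding eqL by (simp add: mult_ac)
  then have "a'^2 * (2*real m+3) \<le> 16^(Suc m)"
    by (rule mult_left_le_imp_le) auto
  then show ?case by (simp add: a'_def algebra_simps)
qed

lemma central_bound: "real (d choose (d div 2))^2 * (real d + 1) \<le> 4^d"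
proof (cases "even d")
  case True
  then obtain m where d: "d = 2*m" by blast
  show ?thesis using central_even[of m] by (simp add: d power_mult)
next
  case False
  then obtain m where d: "d = 2*m+1" using oddE by blast
  have dd: "d div 2 = m" by (simp add: d)
  have "real ((2*(m+1)) choose (m+1))^2 * (2*real (m+1)+1) \<le> 16^(m+1)" by (rule central_even)
  then have h: "(2 * real ((2*m+1) choose m))^2 * (2*real m+3) \<le> 16^(m+1)"
    using arg_cong[OF binom_rec2[of m], of real] by (simp add: algebra_simps del: binomial_Suc_Suc)
  have "real ((2*m+1) choose m)^2 * (real d + 1) \<le> real ((2*m+1) choose m)^2 * (2*real m+3)"
    by (intro mult_left_mono) (auto simp: d)
  also have "\<dots> \<le> 16^(m+1) / 4" using h by (simp add: power2_eq_square algebra_simps)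
  also have "\<dots> = 4^d" by (simp add: d power_mult power_add)
  finally show ?thesis by (simp add: dd d)
qed




lemma deg_split:
  assumes sg: "simple_graph V E" and xV: "x \<in> V" and yV: "y \<in> V" and xy: "x \<noteq> y"
    and WV: "W \<subseteq> V" and xW: "x \<in> W" and yW: "y \<in> W"
  shows "induced_degree E W x = card (W \<inter> {u\<in>V-{x,y}. E x u \<and> \<not> E y u}) + card (W \<inter> {u\<in>V-{x,y}. E x u \<and> E y u}) + (if E x y then 1 else 0)"
proof -
  have fin: "finite W" using sg WV unfolding simple_graph_def using finite_subset by blast
  have nxx: "\<not> E x x" using sg xV unfolding simple_graph_def by blast
  let ?A = "W \<inter> {u\<in>V-{x,y}. E x u \<and> \<not> E y u}"
  let ?C = "W \<inter> {u\<in>V-{x,y}. E x u \<and> E y u}"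
  let ?Y = "{u\<in>{y}. E x u}"
  have eq: "{u\<in>W. E x u} = ?A \<union> (?C \<union> ?Y)" using WV nxx yW by auto
  have "card {u\<in>W. E x u} = card ?A + card (?C \<union> ?Y)"
    unfolding eq using fin by (intro card_Un_disjoint) auto
  also have "card (?C \<union> ?Y) = card ?C + card ?Y"
    using fin by (intro card_Un_disjoint) auto
  finally have c: "card {u\<in>W. E x u} = card ?A + (card ?C + card ?Y)" .
  have "?Y = (if E x y then {y} else {})" by auto
  then have "card ?Y = (if E x y then 1 else 0)" by simp
  then show ?thesis using c unfolding induced_degree_def by simp
qed

lemma pair_count:
  assumes sg: "simple_graph V E" and xV: "x \<in> V" and yV: "y \<in> V" and xy: "x \<noteq> y"
  defines "A \<equiv> {u\<in>V-{x,y}. E x u \<and> \<not> E y u}" and "B \<equiv> {u\<in>V-{x,y}. E y u \<and> \<not> E x u}"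
  shows "card {W\<in>Pow V. x\<in>W \<and> y\<in>W \<and> induced_degree E W x = induced_degree E W y}
          \<le> (card (A\<union>B) choose card B) * 2^(card (V - {x,y} - (A\<union>B)))"
proof -
  have finV: "finite V" using sg unfolding simple_graph_def by blast
  have sym: "E x y = E y x" using sg xV yV unfolding simple_graph_def by blast
  let ?S = "{W\<in>Pow V. x\<in>W \<and> y\<in>W \<and> induced_degree E W x = induced_degree E W y}"
  let ?D = "A \<union> B"
  let ?T = "{Z. Z \<subseteq> ?D \<and> card Z = card B} \<times> Pow (V - {x,y} - ?D)"
  define \<phi> where "\<phi> W = ((W \<inter> A) \<union> (B - W), W - ?D - {x,y})" for W
  have finD: "finite ?D" using finV by (auto simp: A_def B_def)
  have finB: "finite B" using finV by (auto simp: B_def)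
  have AB: "A \<inter> B = {}" by (auto simp: A_def B_def)
  have balance: "card (W \<inter> A) = card (W \<inter> B)" if "W \<in> ?S" for W
  proof -
    have W: "W \<subseteq> V" "x \<in> W" "y \<in> W" "induced_degree E W x = induced_degree E W y" using that by auto
    have e1: "induced_degree E W x = card (W \<inter> A) + card (W \<inter> {u\<in>V-{x,y}. E x u \<and> E y u}) + (if E x y then 1 else 0)"
      using deg_split[OF sg xV yV xy W(1,2,3)] by (simp add: A_def)
    have e2: "induced_degree E W y = card (W \<inter> B) + card (W \<inter> {u\<in>V-{y,x}. E y u \<and> E x u}) + (if E y x then 1 else 0)"
      using deg_split[OF sg yV xV xy[symmetric] W(1,3,2)] by (simp add: B_def insert_commute)
    have "{u\<in>V-{y,x}. E y u \<and> E x u} = {u\<in>V-{x,y}. E x u \<and> E y u}" by auto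
    then show ?thesis using e1 e2 W(4) sym by simp
  qed
  have inj: "inj_on \<phi> ?S"
  proof (rule inj_onI)
    fix W1 W2 assume W1: "W1 \<in> ?S" and W2: "W2 \<in> ?S" and eq: "\<phi> W1 = \<phi> W2"
    have e1: "(W1 \<inter> A) \<union> (B - W1) = (W2 \<inter> A) \<union> (B - W2)" and e2: "W1 - ?D - {x,y} = W2 - ?D - {x,y}"
      using eq by (auto simp: \<phi>_def)
    show "W1 = W2"
    proof (rule set_eqI)
      fix u
      consider "u \<in> A" | "u \<in> B" | "u = x \<or> u = y" | "u \<notin> ?D \<and> u \<noteq> x \<and> u \<noteq> y" by blast
      then show "u \<in> W1 \<longleftrightarrow> u \<in> W2"
      proof cases
        case 1
        then have "u \<notin> B" using AB by blast
        then show ?thesis using e1 1 by blast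
      next
        case 2
        then have "u \<notin> A" using AB by blast
        then show ?thesis using e1 2 by blast
      next
        case 3 then show ?thesis using W1 W2 by auto
      next
        case 4 then show ?thesis using e2 by blast
      qed
    qed
  qed
  have into: "\<phi> ` ?S \<subseteq> ?T"
  proof
    fix p assume "p \<in> \<phi> ` ?S"
    then obtain W where W: "W \<in> ?S" and p: "p = \<phi> W" by blast
    have bal: "card (W \<inter> A) = card (W \<inter> B)" by (rule balance[OF W])
    have "card ((W \<inter> A) \<union> (B - W)) = card (W \<inter> A) + card (B - W)"
      using finD AB by (intro card_Un_disjoint) auto
    also have "\<dots> = card (B \<inter> W) + card (B - W)" using bal by (simp add: Int_commute)
    also have "\<dots> = card B"
    proof -
      have "B = (B \<inter> W) \<union> (B - W)" by blast
      then have "card B = card ((B \<inter> W) \<union> (B - W))" by simp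
      also have "\<dots> = card (B \<inter> W) + card (B - W)" using finB by (intro card_Un_disjoint) auto
      finally show ?thesis by simp
    qed
    finally have c: "card ((W \<inter> A) \<union> (B - W)) = card B" .
    have "W \<subseteq> V" using W by auto
    then show "p \<in> ?T" using c by (auto simp: p \<phi>_def)
  qed
  have finT: "finite ?T" using finD finV by auto
  have "card ?S \<le> card ?T" by (rule card_inj_on_le[OF inj into finT])
  also have "card ?T = (card ?D choose card B) * 2^(card (V - {x,y} - ?D))"
  proof -
    have "card {Z. Z \<subseteq> ?D \<and> card Z = card B} = card ?D choose card B" by (rule n_subsets[OF finD])
    moreover have "card (Pow (V - {x,y} - ?D)) = 2^(card (V - {x,y} - ?D))" using finV by (simp add: card_Pow)
    ultimately show ?thesis by (simp add: card_cartesian_product)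
  qed
  finally show ?thesis .
qed


lemma hom_ge:
  assumes "finite V" "S \<subseteq> V" "homogeneous E S"
  shows "card S \<le> hom V E"
proof -
  have "{card S | S. S \<subseteq> V \<and> homogeneous E S} \<subseteq> card ` Pow V" by auto
  then have "finite {card S | S. S \<subseteq> V \<and> homogeneous E S}" using assms(1) finite_subset by blast
  then show ?thesis unfolding hom_def using assms by (intro Max_ge) auto
qed

lemma hom_sum:
  assumes sg: "simple_graph V E" and xV: "x \<in> V"
  shows "(\<Sum>y\<in>V-{x}. 1 / (real (card ({u\<in>V-{x,y}. E x u \<and> \<not> E y u} \<union> {u\<in>V-{x,y}. E y u \<and> \<not> E x u})) + 1))
          \<le> 2 * real (hom V E)"
proof -
  have finV: "finite V" and sym: "\<forall>u\<in>V. \<forall>v\<in>V. E u v = E v u" and irr: "\<forall>v\<in>V. \<not> E v v"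
    using sg unfolding simple_graph_def by auto
  let ?dd = "\<lambda>y. card ({u\<in>V-{x,y}. E x u \<and> \<not> E y u} \<union> {u\<in>V-{x,y}. E y u \<and> \<not> E x u})"
  define Y1 where "Y1 = {y\<in>V. E x y}"
  define Y0 where "Y0 = {y\<in>V. y \<noteq> x \<and> \<not> E x y}"
  have split: "V - {x} = Y1 \<union> Y0" "Y1 \<inter> Y0 = {}" using irr xV by (auto simp: Y1_def Y0_def)
  have fin1: "finite Y1" and fin0: "finite Y0" using finV by (auto simp: Y1_def Y0_def)
  have findd: "finite ({u\<in>V-{x,y}. E x u \<and> \<not> E y u} \<union> {u\<in>V-{x,y}. E y u \<and> \<not> E x u})" for y
    using finV by auto
  have part1: "(\<Sum>y\<in>Y1. 1 / (real (?dd y) + 1)) \<le> real (hom V E)"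
  proof -
    let ?F = "\<lambda>u v. u \<noteq> v \<and> \<not> E u v"
    have "\<forall>u\<in>Y1. \<forall>v\<in>Y1. ?F u v = ?F v u" using sym unfolding Y1_def by blast
    moreover have "\<forall>v\<in>Y1. \<not> ?F v v" by simp
    ultimately obtain I where I: "I \<subseteq> Y1" "\<forall>u\<in>I. \<forall>v\<in>I. \<not> ?F u v"
      "(\<Sum>y\<in>Y1. 1 / (real (card {z\<in>Y1. ?F y z}) + 1)) \<le> real (card I)"
      using caro_wei[OF fin1, of ?F] by blast
    have "homogeneous E I" using I(2) unfolding homogeneous_def by blast
    moreover have "I \<subseteq> V" using I(1) by (auto simp: Y1_def)
    ultimately have "card I \<le> hom V E" using hom_ge finV by blast
    have "(\<Sum>y\<in>Y1. 1 / (real (?dd y) + 1)) \<le> (\<Sum>y\<in>Y1. 1 / (real (card {z\<in>Y1. ?F y z}) + 1))"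
    proof (intro sum_mono divide_left_mono)
      fix y assume y: "y \<in> Y1"
      have "{z\<in>Y1. ?F y z} \<subseteq> {u\<in>V-{x,y}. E x u \<and> \<not> E y u} \<union> {u\<in>V-{x,y}. E y u \<and> \<not> E x u}"
        using irr xV by (auto simp: Y1_def)
      then have "card {z\<in>Y1. ?F y z} \<le> ?dd y" using findd by (intro card_mono) auto
      then show "real (card {z\<in>Y1. ?F y z}) + 1 \<le> real (?dd y) + 1" by simp
    qed auto
    then show ?thesis using I(3) \<open>card I \<le> hom V E\<close> by linarith
  qed
  have part0: "(\<Sum>y\<in>Y0. 1 / (real (?dd y) + 1)) \<le> real (hom V E)"
  proof -
    have "\<forall>u\<in>Y0. \<forall>v\<in>Y0. E u v = E v u" using sym unfolding Y0_def by blast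
    moreover have "\<forall>v\<in>Y0. \<not> E v v" using irr by (auto simp: Y0_def)
    ultimately obtain I where I: "I \<subseteq> Y0" "\<forall>u\<in>I. \<forall>v\<in>I. \<not> E u v"
      "(\<Sum>y\<in>Y0. 1 / (real (card {z\<in>Y0. E y z}) + 1)) \<le> real (card I)"
      using caro_wei[OF fin0, of E] by blast
    have "homogeneous E I" using I(2) unfolding homogeneous_def by blast
    moreover have "I \<subseteq> V" using I(1) by (auto simp: Y0_def)
    ultimately have "card I \<le> hom V E" using hom_ge finV by blast
    have "(\<Sum>y\<in>Y0. 1 / (real (?dd y) + 1)) \<le> (\<Sum>y\<in>Y0. 1 / (real (card {z\<in>Y0. E y z}) + 1))"
    proof (intro sum_mono divide_left_mono)
      fix y assume y: "y \<in> Y0"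
      have "{z\<in>Y0. E y z} \<subseteq> {u\<in>V-{x,y}. E x u \<and> \<not> E y u} \<union> {u\<in>V-{x,y}. E y u \<and> \<not> E x u}"
        using irr y by (auto simp: Y0_def)
      then have "card {z\<in>Y0. E y z} \<le> ?dd y" using findd by (intro card_mono) auto
      then show "real (card {z\<in>Y0. E y z}) + 1 \<le> real (?dd y) + 1" by simp
    qed auto
    then show ?thesis using I(3) \<open>card I \<le> hom V E\<close> by linarith
  qed
  have "(\<Sum>y\<in>V-{x}. 1 / (real (?dd y) + 1)) = (\<Sum>y\<in>Y1. 1 / (real (?dd y) + 1)) + (\<Sum>y\<in>Y0. 1 / (real (?dd y) + 1))"
    unfolding split(1) using fin1 fin0 split(2) by (rule sum.union_disjoint)
  then show ?thesis using part1 part0 by linarith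
qed


lemma sum_sub:
  assumes "finite V" "W \<subseteq> V"
  shows "(\<Sum>x\<in>W. h x) = (\<Sum>x\<in>V. if x \<in> W then h x else (0::real))"
proof -
  have "{x\<in>V. x \<in> W} = W" using assms(2) by blast
  then show ?thesis using sum.inter_filter[OF assms(1), of h "\<lambda>x. x \<in> W"] by simp
qed

lemma card_contain:
  assumes "finite V" "S \<subseteq> V"
  shows "card {W\<in>Pow V. S \<subseteq> W} = 2^(card V - card S)"
proof -
  have "{W\<in>Pow V. S \<subseteq> W} = (\<lambda>Z. Z \<union> S) ` Pow (V - S)" 
  proof
    show "{W\<in>Pow V. S \<subseteq> W} \<subseteq> (\<lambda>Z. Z \<union> S) ` Pow (V - S)"
    proof
      fix W assume "W \<in> {W\<in>Pow V. S \<subseteq> W}"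
      then have "W = (W - S) \<union> S" "W - S \<in> Pow (V - S)" by auto
      then show "W \<in> (\<lambda>Z. Z \<union> S) ` Pow (V - S)" by blast
    qed
  qed (use assms in auto)
  moreover have "inj_on (\<lambda>Z. Z \<union> S) (Pow (V - S))"
    by (rule inj_onI) blast
  ultimately have "card {W\<in>Pow V. S \<subseteq> W} = card (Pow (V - S))" by (simp add: card_image)
  also have "\<dots> = 2^(card V - card S)" using assms by (simp add: card_Pow card_Diff_subset finite_subset)
  finally show ?thesis .
qed

lemma f_ge:
  assumes "finite V" "W \<subseteq> V"
  shows "num_distinct_degrees E W \<le> f_distinct V E"
proof -
  have "{num_distinct_degrees E S | S. S \<subseteq> V} = num_distinct_degrees E ` Pow V" by auto
  then have "finite {num_distinct_degrees E S | S. S \<subseteq> V}" using assms(1) by simp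
  then show ?thesis unfolding f_distinct_def using assms by (intro Max_ge) auto
qed




lemma g_bound:
  assumes k: "(k::real) > 0" and cb: "real (d choose (d div 2))^2 * (real d + 1) \<le> 4^d"
  shows "real (d choose (d div 2)) / 2^d \<le> k / (real d + 1) + 1 / (4*k)"
proof -
  define g where "g = real (d choose (d div 2)) / 2^d"
  define a where "a = k / (real d + 1)"
  define b where "b = 1 / (4*k)"
  have a0: "a \<ge> 0" and b0: "b \<ge> 0" using k by (auto simp: a_def b_def)
  have "g^2 * (real d + 1) = real (d choose (d div 2))^2 * (real d + 1) / 4^d"
  proof -
    have "(2::real)^d * 2^d = 4^d" by (simp flip: power_mult_distrib)
    then show ?thesis by (simp add: g_def power_divide power2_eq_square)
  qed
  also have "\<dots> \<le> 1" using cb by simp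
  finally have "g^2 * (real d + 1) \<le> 1" .
  then have g2: "g^2 \<le> 1 / (real d + 1)" by (simp add: field_simps)
  have e4: "4 * a * b = 1 / (real d + 1)" using k by (simp add: a_def b_def field_simps)
  also have "\<dots> \<le> (a + b)^2"
  proof -
    have "0 \<le> (a - b)^2" by simp
    then show ?thesis using \<open>4 * a * b = 1 / (real d + 1)\<close> by (simp add: power2_eq_square algebra_simps)
  qed
  finally have ab: "4 * a * b \<le> (a+b)^2" .
  have "g^2 \<le> 4 * a * b" using g2 unfolding e4 .
  then have "g^2 \<le> (a+b)^2" using ab by (rule order.trans)
  moreover have "0 \<le> a + b" using a0 b0 by simp
  ultimately have "g \<le> a + b" by (rule power2_le_imp_le)
  then show ?thesis unfolding g_def a_def b_def .
qed




lemma R_bound: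
  assumes sg: "simple_graph V E" and xV: "x \<in> V" and yV: "y \<in> V" and xy: "x \<noteq> y" and k: "(k::real) > 0"
  shows "real (card {W\<in>Pow V. x\<in>W \<and> y\<in>W \<and> induced_degree E W x = induced_degree E W y})
         \<le> 2^(card V - 2) * (k / (real (card ({u\<in>V-{x,y}. E x u \<and> \<not> E y u} \<union> {u\<in>V-{x,y}. E y u \<and> \<not> E x u})) + 1) + 1 / (4*k))"
proof -
  define A where "A = {u\<in>V-{x,y}. E x u \<and> \<not> E y u}"
  define B where "B = {u\<in>V-{x,y}. E y u \<and> \<not> E x u}"
  define d where "d = card (A \<union> B)"
  have finV: "finite V" using sg unfolding simple_graph_def by blast
  have DU: "A \<union> B \<subseteq> V - {x,y}" by (auto simp: A_def B_def)
  have cU: "card (V - {x,y}) = card V - 2" using xV yV xy finV by (simp add: card_Diff_subset)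
  have cR: "card (V - {x,y} - (A \<union> B)) = card V - 2 - d"
  proof -
    have "finite (A \<union> B)" using DU finV finite_subset by (metis finite_Diff)
    then have "card (V - {x,y} - (A \<union> B)) = card (V - {x,y}) - card (A \<union> B)"
      using DU by (rule card_Diff_subset)
    then show ?thesis using cU d_def by simp
  qed
  have dle: "d \<le> card V - 2"
  proof -
    have "card (A \<union> B) \<le> card (V - {x,y})" using DU finV by (intro card_mono) auto
    then show ?thesis using cU d_def by simp
  qed
  have "card {W\<in>Pow V. x\<in>W \<and> y\<in>W \<and> induced_degree E W x = induced_degree E W y}
        \<le> (d choose card B) * 2^(card V - 2 - d)"
    using pair_count[OF sg xV yV xy] unfolding A_def[symmetric] B_def[symmetric] d_def[symmetric] cR .
  also have "\<dots> \<le> (d choose (d div 2)) * 2^(card V - 2 - d)"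
    by (intro mult_right_mono binomial_maximum) auto
  finally have c0: "card {W\<in>Pow V. x\<in>W \<and> y\<in>W \<and> induced_degree E W x = induced_degree E W y}
        \<le> (d choose (d div 2)) * 2^(card V - 2 - d)" .
  have c1: "real (card {W\<in>Pow V. x\<in>W \<and> y\<in>W \<and> induced_degree E W x = induced_degree E W y})
        \<le> real ((d choose (d div 2)) * 2^(card V - 2 - d))"
    using c0 by (simp only: of_nat_le_iff)
  have c2: "real ((d choose (d div 2)) * 2^(card V - 2 - d)) = real (d choose (d div 2)) * 2^(card V - 2 - d)"
    by simp
  have p: "(2::real)^(card V - 2) = 2^(card V - 2 - d) * 2^d"
    using dle by (simp flip: power_add)
  have "real (d choose (d div 2)) * 2^(card V - 2 - d) = 2^(card V - 2) * (real (d choose (d div 2)) / 2^d)"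
    unfolding p by simp
  also have "\<dots> \<le> 2^(card V - 2) * (k / (real d + 1) + 1 / (4*k))"
    by (intro mult_left_mono g_bound[OF k central_bound]) auto
  finally have c3: "real (d choose (d div 2)) * 2^(card V - 2 - d) \<le> 2^(card V - 2) * (k / (real d + 1) + 1 / (4*k))" .
  show ?thesis using order.trans[OF c1[unfolded c2] c3] unfolding d_def A_def B_def .
qed



lemma W_ineq:
  assumes sg: "simple_graph V E" and WV: "W \<subseteq> V"
  shows "(\<Sum>x\<in>V. \<Sum>y\<in>V. if x\<in>W \<and> y\<in>W then 1 else 0::real)
     \<le> real (f_distinct V E) * (\<Sum>x\<in>V. \<Sum>y\<in>V. if x\<in>W \<and> y\<in>W \<and> induced_degree E W x = induced_degree E W y then 1 else 0)"
proof -
  let ?g = "induced_degree E W"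
  have finV: "finite V" using sg unfolding simple_graph_def by blast
  have finW: "finite W" using finV WV finite_subset by blast
  define S where "S = (\<Sum>x\<in>W. real (card {y\<in>W. ?g y = ?g x}))"
  have S0: "S \<ge> 0" unfolding S_def by (intro sum_nonneg) auto
  have cs: "real (card W)^2 \<le> real (card (?g ` W)) * S" unfolding S_def by (rule count_cs[OF finW])
  have "card (?g ` W) \<le> f_distinct V E"
    using f_ge[OF finV WV, of E] unfolding num_distinct_degrees_def .
  then have "real (card (?g ` W)) * S \<le> real (f_distinct V E) * S"
    using S0 by (intro mult_right_mono) auto
  with cs have main: "real (card W)^2 \<le> real (f_distinct V E) * S" by linarith
  have cW: "real (card W) = (\<Sum>x\<in>V. if x\<in>W then 1 else 0::real)"
  proof -
    have "{x\<in>V. x\<in>W} = W" using WV by blast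
    then show ?thesis using sum_ind_card[OF finV, of "\<lambda>x. x\<in>W"] by simp
  qed
  have eqL: "(\<Sum>x\<in>V. \<Sum>y\<in>V. if x\<in>W \<and> y\<in>W then 1 else 0::real) = real (card W)^2"
    unfolding power2_eq_square cW sum_product by (intro sum.cong refl) auto
  have eqS: "S = (\<Sum>x\<in>V. \<Sum>y\<in>V. if x\<in>W \<and> y\<in>W \<and> ?g x = ?g y then 1 else 0)"
  proof -
    have "S = (\<Sum>x\<in>V. if x\<in>W then real (card {y\<in>W. ?g y = ?g x}) else 0)"
      unfolding S_def by (rule sum_sub[OF finV WV])
    also have "\<dots> = (\<Sum>x\<in>V. \<Sum>y\<in>V. if x\<in>W \<and> y\<in>W \<and> ?g x = ?g y then 1 else 0)"
    proof (intro sum.cong refl)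
      fix x assume "x \<in> V"
      have "{y\<in>V. y\<in>W \<and> ?g x = ?g y} = {y\<in>W. ?g y = ?g x}" using WV by auto
      then have "real (card {y\<in>W. ?g y = ?g x}) = (\<Sum>y\<in>V. if y\<in>W \<and> ?g x = ?g y then 1 else 0)"
        using sum_ind_card[OF finV, of "\<lambda>y. y\<in>W \<and> ?g x = ?g y"] by simp
      then show "(if x\<in>W then real (card {y\<in>W. ?g y = ?g x}) else 0) = (\<Sum>y\<in>V. if x\<in>W \<and> y\<in>W \<and> ?g x = ?g y then 1 else 0)"
        by (cases "x \<in> W") auto
    qed
    finally show ?thesis .
  qed
  show ?thesis using main unfolding eqL eqS .
qed




lemma swap3:
  assumes "finite A" "finite B"
  shows "(\<Sum>W\<in>C. \<Sum>x\<in>A. \<Sum>y\<in>B. F W x y) = (\<Sum>x\<in>A. \<Sum>y\<in>B. \<Sum>W\<in>C. (F W x y::real))"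
proof -
  have "(\<Sum>W\<in>C. \<Sum>x\<in>A. \<Sum>y\<in>B. F W x y) = (\<Sum>x\<in>A. \<Sum>W\<in>C. \<Sum>y\<in>B. F W x y)"
    by (rule sum.swap)
  also have "\<dots> = (\<Sum>x\<in>A. \<Sum>y\<in>B. \<Sum>W\<in>C. F W x y)"
    by (intro sum.cong refl sum.swap)
  finally show ?thesis .
qed

lemma main_ineq:
  assumes sg: "simple_graph V E" and n2: "card V \<ge> 2" and k0: "real (f_distinct V E) > 0"
  shows "real (card V) + 1 \<le> 2 * real (f_distinct V E) + 2 * real (f_distinct V E)^2 * real (hom V E)
            + (real (card V) - 1) / 4"
proof -
  define n where "n = card V"
  define k where "k = real (f_distinct V E)"
  define h where "h = real (hom V E)"
  define T where "T = (2::real)^(n-2)"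
  have finV: "finite V" using sg unfolding simple_graph_def by blast
  have k0': "k > 0" using k0 by (simp add: k_def)
  let ?deg = "induced_degree E"
  define L where "L x y = real (card {W\<in>Pow V. x\<in>W \<and> y\<in>W})" for x y
  define R where "R x y = real (card {W\<in>Pow V. x\<in>W \<and> y\<in>W \<and> ?deg W x = ?deg W y})" for x y
  have finP: "finite (Pow V)" using finV by simp
  have sumW: "(\<Sum>x\<in>V. \<Sum>y\<in>V. L x y) \<le> k * (\<Sum>x\<in>V. \<Sum>y\<in>V. R x y)"
  proof -
    have "(\<Sum>W\<in>Pow V. \<Sum>x\<in>V. \<Sum>y\<in>V. if x\<in>W \<and> y\<in>W then 1 else 0::real)
        \<le> (\<Sum>W\<in>Pow V. k * (\<Sum>x\<in>V. \<Sum>y\<in>V. if x\<in>W \<and> y\<in>W \<and> ?deg W x = ?deg W y then 1 else 0))"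
      unfolding k_def by (intro sum_mono W_ineq[OF sg]) auto
    also have "\<dots> = k * (\<Sum>W\<in>Pow V. \<Sum>x\<in>V. \<Sum>y\<in>V. if x\<in>W \<and> y\<in>W \<and> ?deg W x = ?deg W y then 1 else 0)"
      by (simp add: sum_distrib_left)
    finally have ineq: "(\<Sum>W\<in>Pow V. \<Sum>x\<in>V. \<Sum>y\<in>V. if x\<in>W \<and> y\<in>W then 1 else 0::real)
        \<le> k * (\<Sum>W\<in>Pow V. \<Sum>x\<in>V. \<Sum>y\<in>V. if x\<in>W \<and> y\<in>W \<and> ?deg W x = ?deg W y then 1 else 0)" .
    have e1: "(\<Sum>W\<in>Pow V. \<Sum>x\<in>V. \<Sum>y\<in>V. if x\<in>W \<and> y\<in>W then 1 else 0::real) = (\<Sum>x\<in>V. \<Sum>y\<in>V. L x y)"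
      unfolding swap3[OF finV finV] L_def by (intro sum.cong refl sum_ind_card finP)
    have e2: "(\<Sum>W\<in>Pow V. \<Sum>x\<in>V. \<Sum>y\<in>V. if x\<in>W \<and> y\<in>W \<and> ?deg W x = ?deg W y then 1 else 0::real) = (\<Sum>x\<in>V. \<Sum>y\<in>V. R x y)"
      unfolding swap3[OF finV finV] R_def by (intro sum.cong refl sum_ind_card finP)
    show ?thesis using ineq unfolding e1 e2 .
  qed
  have Lxx: "L x x = 2 * T" if "x \<in> V" for x
  proof -
    have "{W\<in>Pow V. x\<in>W \<and> x\<in>W} = {W\<in>Pow V. {x} \<subseteq> W}" by auto
    then have "L x x = real (2^(n - 1))" using card_contain[OF finV, of "{x}"] that
      by (simp add: L_def n_def)
    also have "\<dots> = 2 * T"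
    proof -
      have "n - 1 = Suc (n - 2)" using n2 by (simp add: n_def)
      then show ?thesis unfolding T_def by simp
    qed
    finally show ?thesis .
  qed
  have Lxy: "L x y = T" if "x \<in> V" "y \<in> V" "x \<noteq> y" for x y
  proof -
    have "{W\<in>Pow V. x\<in>W \<and> y\<in>W} = {W\<in>Pow V. {x,y} \<subseteq> W}" by auto
    moreover have "card {x,y} = 2" using that by simp
    ultimately show ?thesis using card_contain[OF finV, of "{x,y}"] that
      by (simp add: L_def n_def T_def)
  qed
  have Rxx: "R x x = L x x" for x by (simp add: R_def L_def)
  have cVx: "real (card (V - {x})) = real n - 1" if "x \<in> V" for x
    using that finV n2 by (simp add: n_def card_Diff_singleton of_nat_diff)
  have sumL: "(\<Sum>y\<in>V. L x y) = 2 * T + (real n - 1) * T" if "x \<in> V" for x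
  proof -
    have "(\<Sum>y\<in>V. L x y) = L x x + (\<Sum>y\<in>V-{x}. L x y)" using finV that by (rule sum.remove)
    also have "(\<Sum>y\<in>V-{x}. L x y) = (\<Sum>y\<in>V-{x}. T)" using that by (intro sum.cong refl Lxy) auto
    finally show ?thesis using Lxx[OF that] cVx[OF that] by simp
  qed
  have sumR: "(\<Sum>y\<in>V. R x y) \<le> 2 * T + T * (k * (2 * h) + (real n - 1) / (4 * k))" if xV: "x \<in> V" for x
  proof -
    let ?dd = "\<lambda>y. card ({u\<in>V-{x,y}. E x u \<and> \<not> E y u} \<union> {u\<in>V-{x,y}. E y u \<and> \<not> E x u})"
    have "(\<Sum>y\<in>V. R x y) = R x x + (\<Sum>y\<in>V-{x}. R x y)" using finV xV by (rule sum.remove)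
    also have "(\<Sum>y\<in>V-{x}. R x y) \<le> (\<Sum>y\<in>V-{x}. T * (k / (real (?dd y) + 1) + 1 / (4*k)))"
    proof (intro sum_mono)
      fix y assume y: "y \<in> V - {x}"
      then have yV: "y \<in> V" and xy: "x \<noteq> y" by auto
      show "R x y \<le> T * (k / (real (?dd y) + 1) + 1 / (4*k))"
        unfolding R_def T_def n_def using R_bound[OF sg xV yV xy k0'] .
    qed
    also have "\<dots> = T * (k * (\<Sum>y\<in>V-{x}. 1 / (real (?dd y) + 1)) + real (card (V - {x})) / (4*k))"
    proof -
      have "(\<Sum>y\<in>V-{x}. T * (k / (real (?dd y) + 1) + 1 / (4*k)))
          = (\<Sum>y\<in>V-{x}. (T * k) * (1 / (real (?dd y) + 1)) + T * (1 / (4*k)))"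
        by (intro sum.cong refl) (simp add: algebra_simps)
      also have "\<dots> = (T * k) * (\<Sum>y\<in>V-{x}. 1 / (real (?dd y) + 1)) + T * (1 / (4*k)) * real (card (V - {x}))"
        by (simp add: sum.distrib sum_distrib_left)
      also have "\<dots> = T * (k * (\<Sum>y\<in>V-{x}. 1 / (real (?dd y) + 1)) + real (card (V - {x})) / (4*k))"
        by (simp add: algebra_simps)
      finally show ?thesis .
    qed
    also have "\<dots> \<le> T * (k * (2 * h) + (real n - 1) / (4 * k))"
      unfolding cVx[OF xV] h_def
      using hom_sum[OF sg xV] k0' by (intro mult_left_mono add_right_mono) (auto simp: T_def)
    finally show ?thesis using Rxx Lxx[OF xV] by simp
  qed
  have "(\<Sum>x\<in>V. \<Sum>y\<in>V. L x y) = real n * (2 * T + (real n - 1) * T)"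
    using sumL by (simp add: n_def)
  moreover have "(\<Sum>x\<in>V. \<Sum>y\<in>V. R x y) \<le> real n * (2 * T + T * (k * (2 * h) + (real n - 1) / (4 * k)))"
  proof -
    have "(\<Sum>x\<in>V. \<Sum>y\<in>V. R x y) \<le> (\<Sum>x\<in>V. 2 * T + T * (k * (2 * h) + (real n - 1) / (4 * k)))"
      using sumR by (intro sum_mono) auto
    then show ?thesis by (simp add: n_def)
  qed
  ultimately have "real n * (2 * T + (real n - 1) * T) \<le> k * (real n * (2 * T + T * (k * (2 * h) + (real n - 1) / (4 * k))))"
  proof -
    assume a1: "(\<Sum>x\<in>V. \<Sum>y\<in>V. L x y) = real n * (2 * T + (real n - 1) * T)"
    assume a2: "(\<Sum>x\<in>V. \<Sum>y\<in>V. R x y) \<le> real n * (2 * T + T * (k * (2 * h) + (real n - 1) / (4 * k)))"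
    have "k * (\<Sum>x\<in>V. \<Sum>y\<in>V. R x y) \<le> k * (real n * (2 * T + T * (k * (2 * h) + (real n - 1) / (4 * k))))"
      using a2 k0' by (intro mult_left_mono) auto
    then show ?thesis using sumW a1 by linarith
  qed
  moreover have "real n * (2 * T + (real n - 1) * T) = (real n * T) * (real n + 1)"
    by (simp add: algebra_simps)
  moreover have "k * (real n * (2 * T + T * (k * (2 * h) + (real n - 1) / (4 * k))))
      = (real n * T) * (2 * k + 2 * k^2 * h + (real n - 1) / 4)"
    using k0' by (simp add: field_simps power2_eq_square)
  ultimately have "(real n * T) * (real n + 1) \<le> (real n * T) * (2 * k + 2 * k^2 * h + (real n - 1) / 4)"
    by simp
  moreover have "real n * T > 0" using n2 by (simp add: n_def T_def)
  ultimately have "real n + 1 \<le> 2 * k + 2 * k^2 * h + (real n - 1) / 4"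
    by (rule mult_left_le_imp_le)
  then show ?thesis by (simp add: n_def k_def h_def)
qed



theorem theorem1p1:
  fixes V :: "'a set" and E :: "'a \<Rightarrow> 'a \<Rightarrow> bool"
  assumes "simple_graph V E" and "card V \<ge> 1"
  shows "real (f_distinct V E) \<ge> (1/250) * sqrt (real (card V) / real (hom V E))"
proof -
  note sg = assms(1)
  have finV: "finite V" using sg unfolding simple_graph_def by blast
  have "V \<noteq> {}" using assms(2) by (intro notI) simp
  then obtain v where vV: "v \<in> V" by blast
  define k where "k = real (f_distinct V E)"
  define h where "h = real (hom V E)"
  define n where "n = real (card V)"
  have k1: "k \<ge> 1"
  proof -
    have "num_distinct_degrees E {v} = 1" by (simp add: num_distinct_degrees_def)
    then show ?thesis using f_ge[OF finV, of "{v}" E] vV by (simp add: k_def)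
  qed
  have h1: "h \<ge> 1"
  proof -
    have "homogeneous E {v}" by (simp add: homogeneous_def)
    then have "card {v} \<le> hom V E" using hom_ge[OF finV, of "{v}" E] vV by simp
    then show ?thesis by (simp add: h_def)
  qed
  have kk: "k \<le> k^2 * h"
  proof -
    have "1 * 1 \<le> k * h" using k1 h1 by (intro mult_mono) auto
    then have "k * 1 \<le> k * (k * h)" using k1 by (intro mult_left_mono) auto
    then show ?thesis by (simp add: power2_eq_square mult.assoc)
  qed
  have k2: "1 \<le> k^2" using k1 by (simp add: one_le_power)
  have bound: "n \<le> 62500 * k^2 * h"
  proof (cases "n \<le> 62500 * h")
    case True
    have "62500 * h \<le> 62500 * k^2 * h" using k2 h1 by (simp add: mult_right_mono)
    then show ?thesis using True by linarith
  next
    case False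
    then have "card V \<ge> 2" using h1 by (simp add: n_def)
    then have "n + 1 \<le> 2 * k + 2 * k^2 * h + (n - 1) / 4"
      using main_ineq[OF sg] k1 unfolding n_def k_def h_def by simp
    then have "n + 1 \<le> 2 * k + 2 * (k^2 * h) + (n - 1) / 4" by (simp add: mult.assoc)
    moreover define q where "q = k^2 * h"
    ultimately have "n + 1 \<le> 2 * k + 2 * q + (n - 1) / 4" "k \<le> q" using kk by auto
    then have "n \<le> 16 / 3 * q" by (simp add: field_simps)
    then have "n \<le> 16 / 3 * (k^2 * h)" by (simp add: q_def)
    moreover have "0 \<le> k^2 * h" using h1 by simp
    ultimately show ?thesis by (simp add: mult.assoc)
  qed
  have "n / h \<le> (250 * k)^2" using bound h1 by (simp add: divide_le_eq power_mult_distrib)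
  then have "sqrt (n / h) \<le> sqrt ((250 * k)^2)" by (rule real_sqrt_le_mono)
  also have "\<dots> = 250 * k" using k1 by (subst real_sqrt_abs) simp
  finally show ?thesis unfolding n_def h_def k_def by simp
qed


end
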